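(* Let $V$ be an oriented $4$-dimensional real inner product space with an oriented orthonormal basis $f^1,\dots,f^4$ of $V^*$ and dual basis $f_1,\dots,f_4$ of $V$, let $\omega_1=f^1\wedge f^2+f^3\wedge f^4$, $\omega_2=f^1\wedge f^3+f^4\wedge f^2$, $\omega_3=f^1\wedge f^4+f^2\wedge f^3$, and let $e_1,e_2,e_3$ be the standard basis of $\mathbb{R}^3$. Consider the linear map $C:V\otimes V^*\otimes\mathbb{R}^3\to V^*\otimes V^*\otimes\Lambda^2\mathbb{R}^3$, $$C:\ s^{pk}_qf_p\otimes f^q\otimes e_k\longmapsto\sum_{j=1}^3s^{pk}_q(f_p\lrcorner\omega_j)\otimes f^q\otimes(e_k\wedge e_j)$$ (summation over repeated indices), where $f_p\lrcorner\omega_j\in V^*$ is the interior product. Then $C$ is an isomorphism.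
   Context: $\omega_1,\omega_2,\omega_3$ are the standard hyperkähler (self-dual) $2$-forms on $V$. *)

theory Defs
  imports "HOL-Analysis.Analysis"
begin

text \<open>Model: V = real^4 with its standard (oriented, orthonormal) basis f_1..f_4,
  the dual basis f^1..f^4 being the coordinate functionals.  Elements of
  V (x) V^* (x) R^3 are coefficient arrays s with s$p$q$k = s^{pk}_q.
  Bilinear forms / 2-forms on a space real^'n are represented by their
  coefficient matrices B with B(u,v) = sum_{a,b} B$a$b u_a v_b;
  Lambda^2 of a space is realised as the skew-symmetric such matrices,
  with (x^a wedge x^b)(u,v) = u_a v_b - u_b v_a.\<close>

definition wedge :: "'n::finite \<Rightarrow> 'n \<Rightarrow> real^'n^'n" where
  "wedge a b = (\<chi> i j. (if i = a \<and> j = b then 1 else 0) - (if i = b \<and> j = a then 1 else 0))"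

definition omega :: "3 \<Rightarrow> real^4^4" where
  "omega j = (if j = 1 then wedge 1 2 + wedge 3 4
              else if j = 2 then wedge 1 3 + wedge 4 2
              else wedge 1 4 + wedge 2 3)"

definition interior :: "4 \<Rightarrow> real^4^4 \<Rightarrow> real^4" where
  "interior p w = (\<chi> a. w $ p $ a)"

text \<open>The map C : V (x) V^* (x) R^3 \<rightarrow> V^* (x) V^* (x) Lambda^2 R^3;
  the result t satisfies: t$a$q is the Lambda^2 R^3 component of f^a (x) f^q.\<close>
definition Cmap :: "real^3^4^4 \<Rightarrow> real^3^3^4^4" where
  "Cmap s = (\<chi> a q. \<Sum>p\<in>UNIV. \<Sum>k\<in>UNIV. \<Sum>j\<in>UNIV.
                 (s $ p $ q $ k * interior p (omega j) $ a) *\<^sub>R wedge k j)"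

definition Lambda2_target :: "(real^3^3^4^4) set" where
  "Lambda2_target = {t. \<forall>a q. transpose (t $ a $ q) = - (t $ a $ q)}"

end

theory Submission
  imports Defs
begin

lemma UNIV4: "(UNIV::4 set) = {1,2,3,4}"
  using exhaust_4 by auto
lemma UNIV3: "(UNIV::3 set) = {1,2,3}"
  using exhaust_3 by auto
lemma sum4: "sum f (UNIV::4 set) = f 1 + f 2 + f 3 + f 4"
  unfolding UNIV4 by (simp add: add.assoc)
lemma sum3: "sum f (UNIV::3 set) = f 1 + f 2 + f 3"
  unfolding UNIV3 by (simp add: add.assoc)
lemma all4: "(\<forall>x::4. P x) \<longleftrightarrow> P 1 \<and> P 2 \<and> P 3 \<and> P 4"
proof -
  have "(\<forall>x. P x) = (\<forall>x\<in>UNIV. P x)" by simp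
  then show ?thesis unfolding UNIV4 by simp
qed
lemma all3: "(\<forall>x::3. P x) \<longleftrightarrow> P 1 \<and> P 2 \<and> P 3"
proof -
  have "(\<forall>x. P x) = (\<forall>x\<in>UNIV. P x)" by simp
  then show ?thesis unfolding UNIV3 by simp
qed

definition Cinv :: "real^3^3^4^4 \<Rightarrow> real^3^4^4" where
  "Cinv t = (\<chi> p q k.
     if p = 1 \<and> k = 1 then (t$(1::4)$q$(2::3)$(3::3) + t$(3::4)$q$(1::3)$(2::3) + t$(4::4)$q$(1::3)$(3::3)) / 2
     else if p = 1 \<and> k = 2 then (- t$(1::4)$q$(1::3)$(3::3) - t$(2::4)$q$(1::3)$(2::3) + t$(4::4)$q$(2::3)$(3::3)) / 2
     else if p = 1 \<and> k = 3 then (t$(1::4)$q$(1::3)$(2::3) - t$(2::4)$q$(1::3)$(3::3) - t$(3::4)$q$(2::3)$(3::3)) / 2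
     else if p = 2 \<and> k = 1 then (t$(2::4)$q$(2::3)$(3::3) + t$(3::4)$q$(1::3)$(3::3) - t$(4::4)$q$(1::3)$(2::3)) / 2
     else if p = 2 \<and> k = 2 then (t$(1::4)$q$(1::3)$(2::3) - t$(2::4)$q$(1::3)$(3::3) + t$(3::4)$q$(2::3)$(3::3)) / 2
     else if p = 2 \<and> k = 3 then (t$(1::4)$q$(1::3)$(3::3) + t$(2::4)$q$(1::3)$(2::3) + t$(4::4)$q$(2::3)$(3::3)) / 2
     else if p = 3 \<and> k = 1 then (- t$(1::4)$q$(1::3)$(2::3) - t$(2::4)$q$(1::3)$(3::3) + t$(3::4)$q$(2::3)$(3::3)) / 2
     else if p = 3 \<and> k = 2 then (- t$(2::4)$q$(2::3)$(3::3) - t$(3::4)$q$(1::3)$(3::3) - t$(4::4)$q$(1::3)$(2::3)) / 2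
     else if p = 3 \<and> k = 3 then (t$(1::4)$q$(2::3)$(3::3) + t$(3::4)$q$(1::3)$(2::3) - t$(4::4)$q$(1::3)$(3::3)) / 2
     else if p = 4 \<and> k = 1 then (- t$(1::4)$q$(1::3)$(3::3) + t$(2::4)$q$(1::3)$(2::3) + t$(4::4)$q$(2::3)$(3::3)) / 2
     else if p = 4 \<and> k = 2 then (- t$(1::4)$q$(2::3)$(3::3) + t$(3::4)$q$(1::3)$(2::3) - t$(4::4)$q$(1::3)$(3::3)) / 2
     else (- t$(2::4)$q$(2::3)$(3::3) + t$(3::4)$q$(1::3)$(3::3) + t$(4::4)$q$(1::3)$(2::3)) / 2)"

lemma ci:
  "Cinv t $ 1 $ q $ 1 = (t$(1::4)$q$(2::3)$(3::3) + t$(3::4)$q$(1::3)$(2::3) + t$(4::4)$q$(1::3)$(3::3)) / 2"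
  "Cinv t $ 1 $ q $ 2 = (- t$(1::4)$q$(1::3)$(3::3) - t$(2::4)$q$(1::3)$(2::3) + t$(4::4)$q$(2::3)$(3::3)) / 2"
  "Cinv t $ 1 $ q $ 3 = (t$(1::4)$q$(1::3)$(2::3) - t$(2::4)$q$(1::3)$(3::3) - t$(3::4)$q$(2::3)$(3::3)) / 2"
  "Cinv t $ 2 $ q $ 1 = (t$(2::4)$q$(2::3)$(3::3) + t$(3::4)$q$(1::3)$(3::3) - t$(4::4)$q$(1::3)$(2::3)) / 2"
  "Cinv t $ 2 $ q $ 2 = (t$(1::4)$q$(1::3)$(2::3) - t$(2::4)$q$(1::3)$(3::3) + t$(3::4)$q$(2::3)$(3::3)) / 2"
  "Cinv t $ 2 $ q $ 3 = (t$(1::4)$q$(1::3)$(3::3) + t$(2::4)$q$(1::3)$(2::3) + t$(4::4)$q$(2::3)$(3::3)) / 2"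
  "Cinv t $ 3 $ q $ 1 = (- t$(1::4)$q$(1::3)$(2::3) - t$(2::4)$q$(1::3)$(3::3) + t$(3::4)$q$(2::3)$(3::3)) / 2"
  "Cinv t $ 3 $ q $ 2 = (- t$(2::4)$q$(2::3)$(3::3) - t$(3::4)$q$(1::3)$(3::3) - t$(4::4)$q$(1::3)$(2::3)) / 2"
  "Cinv t $ 3 $ q $ 3 = (t$(1::4)$q$(2::3)$(3::3) + t$(3::4)$q$(1::3)$(2::3) - t$(4::4)$q$(1::3)$(3::3)) / 2"
  "Cinv t $ 4 $ q $ 1 = (- t$(1::4)$q$(1::3)$(3::3) + t$(2::4)$q$(1::3)$(2::3) + t$(4::4)$q$(2::3)$(3::3)) / 2"
  "Cinv t $ 4 $ q $ 2 = (- t$(1::4)$q$(2::3)$(3::3) + t$(3::4)$q$(1::3)$(2::3) - t$(4::4)$q$(1::3)$(3::3)) / 2"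
  "Cinv t $ 4 $ q $ 3 = (- t$(2::4)$q$(2::3)$(3::3) + t$(3::4)$q$(1::3)$(3::3) + t$(4::4)$q$(1::3)$(2::3)) / 2"
  by (simp_all add: Cinv_def)

lemmas E = vec_eq_iff all4 all3 sum4 sum3 Cmap_def wedge_def omega_def interior_def Cinv_def

lemma dd: fixes m n :: 3 shows "(\<Sum>k\<in>UNIV. \<Sum>j\<in>UNIV. c k j * ((if m = k \<and> n = j then 1 else 0) - (if m = j \<and> n = k then 1 else 0))) = c m n - (c n m::real)"
  using exhaust_3[of m] exhaust_3[of n] by (auto simp: sum3)
lemma comp: "Cmap s $ a $ q $ m $ n = (\<Sum>p\<in>UNIV. s$p$q$m * omega n $ p $ a - s$p$q$n * omega m $ p $ a)"
proof -
  have "Cmap s $ a $ q $ m $ n = (\<Sum>p\<in>UNIV. \<Sum>k\<in>UNIV. \<Sum>j\<in>UNIV.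
           s $ p $ q $ k * omega j $ p $ a * ((if m = k \<and> n = j then 1 else 0) - (if m = j \<and> n = k then 1 else 0)))"
    by (simp add: Cmap_def interior_def wedge_def sum_component)
  also have "\<dots> = (\<Sum>p\<in>UNIV. s$p$q$m * omega n $ p $ a - s$p$q$n * omega m $ p $ a)"
  proof (rule sum.cong[OF refl])
    fix p show "(\<Sum>k\<in>UNIV. \<Sum>j\<in>UNIV.
           s $ p $ q $ k * omega j $ p $ a * ((if m = k \<and> n = j then 1 else 0) - (if m = j \<and> n = k then 1 else 0)))
       = s$p$q$m * omega n $ p $ a - s$p$q$n * omega m $ p $ a"
      by (rule dd[of "\<lambda>k j. s$p$q$k * omega j $ p $ a" m n])
  qed
  finally show ?thesis .
qed
lemma om: "omega 1 $ p $ a = (if p=1 \<and> a=2 \<or> p=3 \<and> a=4 then 1 else if p=2 \<and> a=1 \<or> p=4 \<and> a=3 then -1 else 0)"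
          "omega 2 $ p $ a = (if p=1 \<and> a=3 \<or> p=4 \<and> a=2 then 1 else if p=3 \<and> a=1 \<or> p=2 \<and> a=4 then -1 else 0)"
          "omega 3 $ p $ a = (if p=1 \<and> a=4 \<or> p=2 \<and> a=3 then 1 else if p=4 \<and> a=1 \<or> p=3 \<and> a=2 then -1 else 0)"
  by (auto simp: omega_def wedge_def)
lemma lin: "linear Cmap"
  by (rule linearI) (simp_all add: vec_eq_iff comp ring_distribs sum.distrib sum_distrib_left sum_subtractf mult.assoc)

lemma left: "Cinv (Cmap s) = s"
  by (simp add: vec_eq_iff all4 all3 ci comp sum4 om)

lemma rc:
  "Cmap (Cinv t) $ 1 $ q $ 1 $ 2 = t $ 1 $ q $ 1 $ 2"
  "Cmap (Cinv t) $ 1 $ q $ 1 $ 3 = t $ 1 $ q $ 1 $ 3"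
  "Cmap (Cinv t) $ 1 $ q $ 2 $ 3 = t $ 1 $ q $ 2 $ 3"
  "Cmap (Cinv t) $ 2 $ q $ 1 $ 2 = t $ 2 $ q $ 1 $ 2"
  "Cmap (Cinv t) $ 2 $ q $ 1 $ 3 = t $ 2 $ q $ 1 $ 3"
  "Cmap (Cinv t) $ 2 $ q $ 2 $ 3 = t $ 2 $ q $ 2 $ 3"
  "Cmap (Cinv t) $ 3 $ q $ 1 $ 2 = t $ 3 $ q $ 1 $ 2"
  "Cmap (Cinv t) $ 3 $ q $ 1 $ 3 = t $ 3 $ q $ 1 $ 3"
  "Cmap (Cinv t) $ 3 $ q $ 2 $ 3 = t $ 3 $ q $ 2 $ 3"
  "Cmap (Cinv t) $ 4 $ q $ 1 $ 2 = t $ 4 $ q $ 1 $ 2"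
  "Cmap (Cinv t) $ 4 $ q $ 1 $ 3 = t $ 4 $ q $ 1 $ 3"
  "Cmap (Cinv t) $ 4 $ q $ 2 $ 3 = t $ 4 $ q $ 2 $ 3"
  by (simp_all add: comp sum4 ci om field_simps)

lemma skc: "Cmap s $a$q$j$i = - (Cmap s $a$q$i$j)"
  unfolding comp by (simp add: sum_negf[symmetric])

lemma right: assumes "t \<in> Lambda2_target" shows "Cmap (Cinv t) = t"
proof -
  have sk: "t$a$q$j$i = - t$a$q$i$j" for a q i j
  proof -
    have "transpose (t$a$q) = - (t$a$q)" using assms unfolding Lambda2_target_def by blast
    then have "transpose (t$a$q) $ i $ j = (- (t$a$q)) $ i $ j" by simp
    then show ?thesis unfolding transpose_def by simp
  qed
  have d: "t$a$q$i$i = 0" for a q i using sk[of a q i i] by simp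
  have d2: "Cmap s$a$q$i$i = 0" for s a q i using skc[of s a q i i] by simp
  have key: "Cmap (Cinv t) $a$q$m$n = t$a$q$m$n" for a q m n
    using exhaust_4[of a] exhaust_3[of m] exhaust_3[of n]
    apply (elim disjE)
    apply (simp_all only: rc d d2)
    apply (simp_all only: sk[of _ _ 1 2] sk[of _ _ 1 3] sk[of _ _ 2 3] skc[of _ _ _ 2 1] skc[of _ _ _ 3 1] skc[of _ _ _ 3 2] rc)
    done
  show ?thesis by (simp add: vec_eq_iff key)
qed

lemma img: "Cmap s \<in> Lambda2_target"
proof -
  have "transpose (Cmap s$a$q) = - (Cmap s$a$q)" for a q
  proof -
    have "transpose (Cmap s$a$q) $ i $ j = (- (Cmap s$a$q)) $ i $ j" for i j
      unfolding transpose_def using skc[of s a q j i] by simp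
    then show ?thesis by (simp add: vec_eq_iff)
  qed
  then show ?thesis unfolding Lambda2_target_def by blast
qed

theorem propositionA3:
  shows "linear Cmap \<and> bij_betw Cmap UNIV Lambda2_target"
proof -
  have "bij_betw Cmap UNIV Lambda2_target"
    unfolding bij_betw_def
  proof
    show "inj Cmap" by (metis injI left)
    show "range Cmap = Lambda2_target"
      using img right by (metis image_subsetI subsetI subset_antisym rangeI)
  qed
  with lin show ?thesis by simp
qed
end
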